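(* Let $\rho_\lambda$ satisfy Condition (R), let $m\ge1$, $A\subset[m]$ and $\xi>0$. Then $$\mathcal{C}^m_\rho(A,\xi)\subset\bigcup_{A'\subset[m],\ |A'|=|A|}\mathcal{C}^m_1(A',\xi).$$
   Context: $\rho_\lambda(u)=\sum_i\rho_\lambda(|u_i|)$ for $u\in\mathbb{R}^m$; $u_A$ denotes $u$ restricted to the coordinates in $A$. $\mathcal{C}^m_\rho(A,\xi)=\{u\in\mathbb{R}^m:\rho_\lambda(u_{A^c})\le\xi\rho_\lambda(u_A)\}$ and $\mathcal{C}^m_1(A,\xi)=\{u\in\mathbb{R}^m:\|u_{A^c}\|_1\le\xi\|u_A\|_1\}$. Condition (R): $\rho_\lambda:[0,\infty)\to[0,\infty)$ is concave, nondecreasing, right-differentiable at $0$, $\rho_\lambda(0)=0$, $0<\rho_\lambda'(0^+)<\infty$, and there are constants $a,b\ge0$ independent of $\lambda$ with $\rho_\lambda(x)\ge\min\{a\lambda x,b\lambda^2\}$. *)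

theory Defs
  imports "HOL-Analysis.Analysis"
begin

text \<open>Condition (R) for a family of penalties rho lam : [0,inf) -> [0,inf), indexed by lam > 0.
  Functions are typed real => real; only their values on [0,inf) matter.\<close>
definition cond_R :: "(real \<Rightarrow> real \<Rightarrow> real) \<Rightarrow> bool" where
  "cond_R rho \<longleftrightarrow>
     (\<forall>lam>0.
        (\<forall>x\<ge>0. rho lam x \<ge> 0) \<and>
        concave_on {0..} (rho lam) \<and>
        mono_on {0..} (rho lam) \<and>
        rho lam 0 = 0 \<and>
        (\<exists>d. (rho lam has_real_derivative d) (at 0 within {0..}) \<and> 0 < d)) \<and>
     (\<exists>a b. a \<ge> 0 \<and> b \<ge> 0 \<and>
        (\<forall>lam>0. \<forall>x\<ge>0. rho lam x \<ge> min (a * lam * x) (b * lam\<^sup>2)))"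

definition rho_restr :: "(real \<Rightarrow> real) \<Rightarrow> real ^ 'm \<Rightarrow> 'm set \<Rightarrow> real" where
  "rho_restr r u S = (\<Sum>i\<in>S. r \<bar>u $ i\<bar>)"

definition l1_restr :: "real ^ 'm \<Rightarrow> 'm set \<Rightarrow> real" where
  "l1_restr u S = (\<Sum>i\<in>S. \<bar>u $ i\<bar>)"

definition cone_rho :: "(real \<Rightarrow> real) \<Rightarrow> ('m::finite) set \<Rightarrow> real \<Rightarrow> (real ^ 'm) set" where
  "cone_rho r A \<xi> = {u. rho_restr r u (- A) \<le> \<xi> * rho_restr r u A}"

definition cone_l1 :: "('m::finite) set \<Rightarrow> real \<Rightarrow> (real ^ 'm) set" where
  "cone_l1 A \<xi> = {u. l1_restr u (- A) \<le> \<xi> * l1_restr u A}"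

end

theory Submission
  imports Defs
begin

lemma exists_ordered_set:
  fixes f :: "'m::finite \<Rightarrow> real" and A :: "'m set"
  shows "\<exists>S. card S = card A \<and> (\<forall>i\<in>S. \<forall>j\<in>-S. f j \<le> f i)"
proof -
  define F where "F = {S::'m set. card S = card A}"
  have finF: "finite F" by simp
  have neF: "F \<noteq> {}" using F_def by auto
  define M where "M = Max ((\<lambda>S. sum f S) ` F)"
  have "M \<in> (\<lambda>S. sum f S) ` F" unfolding M_def using finF neF by (intro Max_in) auto
  then obtain S where SF: "S \<in> F" and SM: "sum f S = M" by auto
  have maxS: "sum f T \<le> sum f S" if "T \<in> F" for T
    using SM M_def finF that by (metis Max_ge finite_imageI image_eqI)
  show ?thesis
  proof (intro exI conjI ballI)
    show "card S = card A" using SF F_def by simp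
  next
    fix i j assume i: "i \<in> S" and j: "j \<in> - S"
    show "f j \<le> f i"
    proof (rule ccontr)
      assume "\<not> f j \<le> f i"
      define T where "T = insert j (S - {i})"
      have jn: "j \<notin> S - {i}" using j by auto
      have "card T = card S" unfolding T_def using i jn
        by (simp add: card_Diff_singleton) (metis Suc_pred card_gt_0_iff emptyE finite)
      hence "T \<in> F" using SF F_def by simp
      moreover have "sum f T = sum f S - f i + f j" unfolding T_def using i jn
        by (simp add: sum_diff1)
      ultimately show False using maxS \<open>\<not> f j \<le> f i\<close> by fastforce
    qed
  qed
qed

lemma ordered_sum_max:
  fixes w :: "'m::finite \<Rightarrow> real"
  assumes ord: "\<forall>i\<in>S. \<forall>j\<in>-S. w j \<le> w i" and cd: "card B = card S"
  shows "sum w B \<le> sum w S"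
proof -
  have c: "card (S - B) = card (B - S)"
    using cd by (metis Int_commute card_Diff_subset_Int finite)
  have "real (card (B - S)) * sum w (S - B) = (\<Sum>j\<in>B - S. \<Sum>i\<in>S - B. w i)" by simp
  also have "\<dots> \<ge> (\<Sum>j\<in>B - S. \<Sum>i\<in>S - B. w j)"
    by (intro sum_mono) (use ord in auto)
  finally have le: "real (card (S - B)) * sum w (B - S) \<le> real (card (B - S)) * sum w (S - B)"
    using c by (simp add: sum_distrib_left)
  have le2: "sum w (B - S) \<le> sum w (S - B)"
  proof (cases "card (B - S) = 0")
    case True
    then have "B - S = {}" "S - B = {}" using c card_0_eq[of "B - S"] card_0_eq[of "S - B"] by auto
    then show ?thesis by simp
  next
    case False
    then have "real (card (B - S)) > 0" by linarith
    then show ?thesis using le c by (simp add: mult_le_cancel_left_pos)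
  qed
  have "sum w B = sum w (B - S) + sum w (B \<inter> S)"
    by (metis finite sum.Int_Diff add.commute)
  moreover have "sum w S = sum w (S - B) + sum w (B \<inter> S)"
    by (metis finite Int_commute sum.Int_Diff add.commute)
  ultimately show ?thesis using le2 by simp
qed

lemma concave_ratio:
  fixes r :: "real \<Rightarrow> real"
  assumes cv: "concave_on {0..} r" and r0: "r 0 = 0" and x: "0 \<le> x" and xy: "x \<le> y"
  shows "x * r y \<le> y * r x"
proof (cases "y = 0")
  case True then show ?thesis using x xy by simp
next
  case False
  then have y: "y > 0" using x xy by simp
  have "(x/y) * r y + (1 - x/y) * r 0 \<le> r ((x/y) *\<^sub>R y + (1 - x/y) *\<^sub>R 0)"
    using cv unfolding concave_on_iff
    by (metis atLeast_iff diff_ge_0_iff_ge divide_le_eq_1 divide_nonneg_pos le_add_diff_inverse order_refl x xy y less_eq_real_def)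
  also have "(x/y) *\<^sub>R y + (1 - x/y) *\<^sub>R 0 = x" using y by simp
  finally have "(x/y) * r y \<le> r x" using r0 by simp
  then show ?thesis using y by (simp add: field_simps)
qed

lemma pos_of_pos:
  fixes r :: "real \<Rightarrow> real"
  assumes nn: "\<forall>x\<ge>0. r x \<ge> 0" and mono: "mono_on {0..} r" and r0: "r 0 = 0"
    and d: "(r has_real_derivative d) (at 0 within {0..})" and dpos: "0 < d"
    and x: "x > 0"
  shows "r x > 0"
proof (rule ccontr)
  assume "\<not> r x > 0"
  moreover have "r x \<ge> 0" using nn x by simp
  ultimately have rx: "r x = 0" by linarith
  have z: "r y = 0" if "0 \<le> y" "y \<le> x" for y
    using mono nn rx that x by (metis atLeast_iff mono_onD order.antisym less_eq_real_def)
  have "((\<lambda>y. (r y - r 0) / (y - 0)) \<longlongrightarrow> d) (at 0 within {0..})"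
    using d by (simp add: has_field_derivative_iff)
  then have t: "((\<lambda>y. (r y - r 0) / (y - 0)) \<longlongrightarrow> d) (at_right 0)"
    by (rule tendsto_mono[rotated]) (intro at_le, auto)
  have ev: "eventually (\<lambda>y. (r y - r 0) / (y - 0) = 0) (at_right 0)"
    unfolding eventually_at_right[OF x]
    by (intro exI[of _ x]) (use x z r0 in auto)
  have "((\<lambda>y. (r y - r 0) / (y - 0)) \<longlongrightarrow> 0) (at_right (0::real))"
    by (rule tendsto_eventually[OF ev])
  then have "d = 0" using t tendsto_unique trivial_limit_at_right_real by blast
  then show False using dpos by simp
qed

theorem lemma12:
  fixes rho :: "real \<Rightarrow> real \<Rightarrow> real" and lam :: real and \<xi> :: real
    and A :: "('m::finite) set"
  assumes "cond_R rho" and "lam > 0" and "\<xi> > 0"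
  shows "cone_rho (rho lam) A \<xi> \<subseteq> (\<Union>A'\<in>{A'. card A' = card A}. cone_l1 A' \<xi>)"
proof
  fix u :: "real ^ 'm"
  assume uin: "u \<in> cone_rho (rho lam) A \<xi>"
  define r where "r = rho lam"
  have nn: "\<forall>x\<ge>0. r x \<ge> 0" and cv: "concave_on {0..} r" and mono: "mono_on {0..} r"
    and r0: "r 0 = 0" and dd: "\<exists>d. (r has_real_derivative d) (at 0 within {0..}) \<and> 0 < d"
    using assms(1,2) unfolding cond_R_def r_def by auto
  obtain d where d: "(r has_real_derivative d) (at 0 within {0..})" "0 < d" using dd by auto
  define R where "R X = rho_restr r u X" for X
  define L where "L X = l1_restr u X" for X
  obtain S where cS: "card S = card A" and ordS: "\<forall>i\<in>S. \<forall>j\<in>-S. \<bar>u$j\<bar> \<le> \<bar>u$i\<bar>"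
    using exists_ordered_set[where f="\<lambda>i. \<bar>u$i\<bar>" and A=A] by auto
  have ordR: "\<forall>i\<in>S. \<forall>j\<in>-S. r \<bar>u$j\<bar> \<le> r \<bar>u$i\<bar>"
    using ordS mono by (auto intro: mono_onD)
  have RA: "R A \<le> R S" unfolding R_def rho_restr_def
    by (rule ordered_sum_max[where w="\<lambda>i. r \<bar>u$i\<bar>", OF ordR cS[symmetric]])
  have split: "R X + R (-X) = sum (\<lambda>i. r \<bar>u$i\<bar>) UNIV" for X
    unfolding R_def rho_restr_def
    by (metis Compl_partition Diff_eq inf_compl_bot finite sum.union_disjoint boolean_algebra.conj_zero_right)
  have RnA: "R (-A) \<le> \<xi> * R A" using uin unfolding cone_rho_def R_def r_def by simp
  have RnS: "R (-S) \<le> \<xi> * R S"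
  proof -
    have "R (-S) \<le> R (-A)" using split[of S] split[of A] RA by linarith
    also have "\<dots> \<le> \<xi> * R A" by (rule RnA)
    also have "\<dots> \<le> \<xi> * R S" using RA assms(3) by simp
    finally show ?thesis .
  qed
  have Rnn: "R X \<ge> 0" for X unfolding R_def rho_restr_def using nn by (simp add: sum_nonneg)
  have Lnn: "L X \<ge> 0" for X unfolding L_def l1_restr_def by (simp add: sum_nonneg)
  have key: "L (-S) * R S \<le> L S * R (-S)"
  proof -
    have "L (-S) * R S = (\<Sum>j\<in>-S. \<Sum>i\<in>S. \<bar>u$j\<bar> * r \<bar>u$i\<bar>)"
      unfolding L_def R_def l1_restr_def rho_restr_def by (simp add: sum_product)
    also have "\<dots> \<le> (\<Sum>j\<in>-S. \<Sum>i\<in>S. \<bar>u$i\<bar> * r \<bar>u$j\<bar>)"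
      by (intro sum_mono concave_ratio[OF cv r0]) (use ordS in auto)
    also have "\<dots> = L S * R (-S)"
      unfolding L_def R_def l1_restr_def rho_restr_def
      by (subst sum.swap) (simp add: sum_product)
    finally show ?thesis .
  qed
  have "L (-S) \<le> \<xi> * L S"
  proof (cases "R S > 0")
    case True
    have "L (-S) * R S \<le> L S * (\<xi> * R S)"
      using key RnS Lnn[of S] by (meson mult_left_mono order_trans)
    then have "L (-S) * R S \<le> (\<xi> * L S) * R S" by (simp add: ac_simps)
    then show ?thesis using True by simp
  next
    case False
    then have "R S = 0" using Rnn[of S] by simp
    then have "R (-S) \<le> 0" using RnS by simp
    then have "sum (\<lambda>i. r \<bar>u$i\<bar>) (-S) = 0" using Rnn[of "-S"] unfolding R_def rho_restr_def by simp
    then have "\<forall>j\<in>-S. r \<bar>u$j\<bar> = 0" using nn by (subst (asm) sum_nonneg_eq_0_iff) auto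
    then have "\<forall>j\<in>-S. u$j = 0"
      using pos_of_pos[OF nn mono r0 d] by (metis abs_ge_zero less_eq_real_def less_irrefl zero_less_abs_iff)
    then have "L (-S) = 0" unfolding L_def l1_restr_def by simp
    then show ?thesis using Lnn[of S] assms(3) by simp
  qed
  then have "u \<in> cone_l1 S \<xi>" unfolding cone_l1_def L_def by simp
  then show "u \<in> (\<Union>A'\<in>{A'. card A' = card A}. cone_l1 A' \<xi>)" using cS by auto
qed

end
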